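(* Let $k_1,k_2$ be integers with $1\le k_1$ and $1<k_2$. Then for lines $L_1,L_2$ the following are equivalent: (i) $L_1\perp L_2$; (ii) there are $X_1\in\mathcal H_{k_1}$, $X_2\in\mathcal H_{k_2}$ such that $X_1\perp_x X_2$ and $L_i\subset X_i$ for $i=1,2$.
   Context: Let $V$ be a vector space over a field with a nondegenerate symmetric bilinear form $\xi$ having no isotropic vectors. Points are elements of $V$; (affine) subspaces are sets $p+W$ with $W$ a linear subspace, of dimension $\dim W$; lines are the $1$-dimensional subspaces. $\mathcal H_k$ is the family of $k$-dimensional subspaces. For nonempty subspaces $X,Y$: $X\perp Y$ iff $\xi(b-a,d-c)=0$ for all $a,b\in X$, $c,d\in Y$ (for lines this is the usual orthogonality of directions); $X\perp_x Y$ iff $X\perp Y$ and $X\cap Y\neq\emptyset$. *)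

theory Defs
  imports Main "HOL.Vector_Spaces"
begin

definition sym_bilinear :: "('a::field \<Rightarrow> 'v::ab_group_add \<Rightarrow> 'v) \<Rightarrow> ('v \<Rightarrow> 'v \<Rightarrow> 'a) \<Rightarrow> bool" where
  "sym_bilinear scale xi \<longleftrightarrow>
     (\<forall>x y. xi x y = xi y x) \<and>
     (\<forall>x y z. xi (x + y) z = xi x z + xi y z) \<and>
     (\<forall>r x z. xi (scale r x) z = r * xi x z)"

definition nondegenerate :: "('v::zero \<Rightarrow> 'v \<Rightarrow> 'a::zero) \<Rightarrow> bool" where
  "nondegenerate xi \<longleftrightarrow> (\<forall>x. (\<forall>y. xi x y = 0) \<longrightarrow> x = 0)"

definition no_isotropic :: "('v::zero \<Rightarrow> 'v \<Rightarrow> 'a::zero) \<Rightarrow> bool" where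
  "no_isotropic xi \<longleftrightarrow> (\<forall>x. x \<noteq> 0 \<longrightarrow> xi x x \<noteq> 0)"

definition lin_dim :: "('a::field \<Rightarrow> 'v::ab_group_add \<Rightarrow> 'v) \<Rightarrow> 'v set \<Rightarrow> nat \<Rightarrow> bool" where
  "lin_dim scale W k \<longleftrightarrow>
     (\<exists>B. finite B \<and> card B = k \<and> \<not> module.dependent scale B \<and> W = module.span scale B)"

definition H :: "('a::field \<Rightarrow> 'v::ab_group_add \<Rightarrow> 'v) \<Rightarrow> nat \<Rightarrow> 'v set set" where
  "H scale k = {X. \<exists>p W. lin_dim scale W k \<and> X = (\<lambda>w. p + w) ` W}"

abbreviation lines :: "('a::field \<Rightarrow> 'v::ab_group_add \<Rightarrow> 'v) \<Rightarrow> 'v set set" where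
  "lines scale \<equiv> H scale 1"

definition perp :: "('v::ab_group_add \<Rightarrow> 'v \<Rightarrow> 'a::zero) \<Rightarrow> 'v set \<Rightarrow> 'v set \<Rightarrow> bool" where
  "perp xi X Y \<longleftrightarrow> X \<noteq> {} \<and> Y \<noteq> {} \<and>
     (\<forall>a\<in>X. \<forall>b\<in>X. \<forall>c\<in>Y. \<forall>d\<in>Y. xi (b - a) (d - c) = 0)"

definition perp_x :: "('v::ab_group_add \<Rightarrow> 'v \<Rightarrow> 'a::zero) \<Rightarrow> 'v set \<Rightarrow> 'v set \<Rightarrow> bool" where
  "perp_x xi X Y \<longleftrightarrow> perp xi X Y \<and> X \<inter> Y \<noteq> {}"

end

theory Submission
  imports Defs
begin

locale bform = vector_space scale for scale :: "'a::field \<Rightarrow> 'v::ab_group_add \<Rightarrow> 'v" +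
  fixes xi :: "'v \<Rightarrow> 'v \<Rightarrow> 'a"
  assumes sb: "sym_bilinear scale xi" and ni: "no_isotropic xi"
begin
notation scale (infixr "*s" 75)

lemma xsym: "xi x y = xi y x" using sb unfolding sym_bilinear_def by blast
lemma xadd: "xi (x + y) z = xi x z + xi y z" using sb unfolding sym_bilinear_def by blast
lemma xscale: "xi (r *s x) z = r * xi x z" using sb unfolding sym_bilinear_def by blast
lemma xzero[simp]: "xi 0 z = 0"
  using xscale[of 0 0 z] by simp
lemma xneg: "xi (- x) z = - xi x z"
  using xscale[of "-1" x z] by simp
lemma xdiff: "xi (x - y) z = xi x z - xi y z"
  using xadd[of x "-y" z] xneg[of y z] by simp
lemma xsum: "xi (sum f S) z = (\<Sum>s\<in>S. xi (f s) z)"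
  by (induction S rule: infinite_finite_induct) (auto simp: xadd)
lemma xnz: "x \<noteq> 0 \<Longrightarrow> xi x x \<noteq> 0" using ni unfolding no_isotropic_def by blast

lemma span_orth1: "x \<in> span A \<Longrightarrow> (\<And>a. a \<in> A \<Longrightarrow> xi a y = 0) \<Longrightarrow> xi x y = 0"
  by (induction x rule: span_induct_alt) (auto simp: xadd xscale)

lemma span_orth: "x \<in> span A \<Longrightarrow> y \<in> span B \<Longrightarrow> (\<And>a b. a \<in> A \<Longrightarrow> b \<in> B \<Longrightarrow> xi a b = 0) \<Longrightarrow> xi x y = 0"
proof -
  assume x: "x \<in> span A" and y: "y \<in> span B" and h: "\<And>a b. a \<in> A \<Longrightarrow> b \<in> B \<Longrightarrow> xi a b = 0"
  have "\<And>a. a \<in> A \<Longrightarrow> xi a y = 0"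
  proof -
    fix a assume a: "a \<in> A"
    have "xi y a = 0" using span_orth1[OF y] h[OF a] xsym by metis
    then show "xi a y = 0" by (simp add: xsym)
  qed
  then show ?thesis using span_orth1[OF x] by blast
qed

definition orth :: "'v set \<Rightarrow> bool" where
  "orth S \<longleftrightarrow> 0 \<notin> S \<and> (\<forall>x\<in>S. \<forall>y\<in>S. x \<noteq> y \<longrightarrow> xi x y = 0)"

lemma orth_indep: "orth S \<Longrightarrow> independent S"
proof
  assume o: "orth S" and "dependent S"
  then obtain a where a: "a \<in> S" "a \<in> span (S - {a})" by (auto simp: dependent_def)
  have "xi a a = 0"
    by (rule span_orth1[OF a(2)]) (use o a(1) in \<open>auto simp: orth_def xsym\<close>)
  moreover have "a \<noteq> 0" using o a by (auto simp: orth_def)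
  ultimately show False using xnz by blast
qed

lemma orth_extend:
  assumes "\<exists>B. finite B \<and> card B = n \<and> independent B"
  shows "finite S \<Longrightarrow> orth S \<Longrightarrow> card S \<le> n \<Longrightarrow> \<exists>T. S \<subseteq> T \<and> finite T \<and> orth T \<and> card T = n"
proof (induction "n - card S" arbitrary: S)
  case 0
  then show ?case by auto
next
  case (Suc m)
  obtain B where B: "finite B" "card B = n" "independent B" using assms by blast
  have "\<not> B \<subseteq> span S"
  proof
    assume "B \<subseteq> span S"
    then have "card B \<le> card S" using independent_span_bound[OF Suc.prems(1) B(3)] by blast
    then show False using Suc.hyps(2) B(2) by linarith
  qed
  then obtain v where v: "v \<in> B" "v \<notin> span S" by blast
  define v' where "v' = v - (\<Sum>s\<in>S. (xi v s / xi s s) *s s)"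
  have sp: "(\<Sum>s\<in>S. (xi v s / xi s s) *s s) \<in> span S"
    by (intro span_sum span_scale span_base)
  have v'nz: "v' \<noteq> 0" using v(2) sp unfolding v'_def by auto
  have v'orth: "xi v' t = 0" if t: "t \<in> S" for t
  proof -
    have tnz: "xi t t \<noteq> 0" using Suc.prems(2) t xnz unfolding orth_def by metis
    have "(\<Sum>s\<in>S. xi ((xi v s / xi s s) *s s) t) = (\<Sum>s\<in>S. if s = t then xi v t else 0)"
    proof (rule sum.cong)
      fix s assume s: "s \<in> S"
      show "xi ((xi v s / xi s s) *s s) t = (if s = t then xi v t else 0)"
        using Suc.prems(2) s t tnz by (auto simp: xscale orth_def)
    qed simp
    also have "\<dots> = xi v t" using t Suc.prems(1) by simp
    finally show ?thesis unfolding v'_def xdiff xsum by simp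
  qed
  have v'S: "v' \<notin> S" using v'orth v'nz xnz by blast
  have o': "orth (insert v' S)"
    using Suc.prems(2) v'nz v'orth by (auto simp: orth_def xsym)
  have c': "card (insert v' S) = card S + 1" using v'S Suc.prems(1) by simp
  have "\<exists>T. insert v' S \<subseteq> T \<and> finite T \<and> orth T \<and> card T = n"
    by (rule Suc.hyps(1)) (use Suc.hyps(2) Suc.prems(1) o' c' in auto)
  then show ?case by blast
qed

lemma line_form: "L \<in> H scale 1 \<Longrightarrow> \<exists>p u. u \<noteq> 0 \<and> L = (\<lambda>w. p + w) ` span {u}"
proof -
  assume "L \<in> H scale 1"
  then obtain p W where W: "lin_dim scale W 1" "L = (\<lambda>w. p + w) ` W" by (auto simp: H_def)
  then obtain B where B: "finite B" "card B = 1" "independent B" "W = span B"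
    by (auto simp: lin_dim_def)
  then obtain u where "B = {u}" by (auto simp: card_Suc_eq)
  then show ?thesis using B W by auto
qed

lemma main:
  assumes nB: "\<exists>B. finite B \<and> card B = k1 + k2 \<and> independent B"
    and k: "1 \<le> k1" "1 < k2"
    and L: "L1 \<in> H scale 1" "L2 \<in> H scale 1"
  shows "perp xi L1 L2 \<longleftrightarrow>
         (\<exists>X1 \<in> H scale k1. \<exists>X2 \<in> H scale k2. perp_x xi X1 X2 \<and> L1 \<subseteq> X1 \<and> L2 \<subseteq> X2)"
proof -
  obtain a u1 where a: "u1 \<noteq> 0" "L1 = (\<lambda>w. a + w) ` span {u1}" using line_form[OF L(1)] by blast
  obtain b u2 where b: "u2 \<noteq> 0" "L2 = (\<lambda>w. b + w) ` span {u2}" using line_form[OF L(2)] by blast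
  have ne1: "L1 \<noteq> {}" and ne2: "L2 \<noteq> {}" using a b span_zero by auto
  show ?thesis
  proof
    assume "\<exists>X1 \<in> H scale k1. \<exists>X2 \<in> H scale k2. perp_x xi X1 X2 \<and> L1 \<subseteq> X1 \<and> L2 \<subseteq> X2"
    then obtain X1 X2 where "perp_x xi X1 X2" "L1 \<subseteq> X1" "L2 \<subseteq> X2" by blast
    then show "perp xi L1 L2" using ne1 ne2 unfolding perp_x_def perp_def by blast
  next
    assume P: "perp xi L1 L2"
    have in1: "a + u1 \<in> L1" "a \<in> L1" using a span_base[of u1 "{u1}"] span_zero by auto
    have in2: "b + u2 \<in> L2" "b \<in> L2" using b span_base[of u2 "{u2}"] span_zero by auto
    have u12: "xi u1 u2 = 0"
      using P in1 in2 unfolding perp_def by (metis add_diff_cancel_left')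
    have n1: "xi u1 u1 \<noteq> 0" and n2: "xi u2 u2 \<noteq> 0" using a b xnz by auto
    define d where "d = a - b"
    define \<alpha> where "\<alpha> = xi d u1 / xi u1 u1"
    define d' where "d' = d - \<alpha> *s u1"
    define \<beta> where "\<beta> = xi d' u2 / xi u2 u2"
    define w where "w = d' - \<beta> *s u2"
    have wu1: "xi w u1 = 0"
      unfolding w_def d'_def \<alpha>_def using n1 u12 by (simp add: xdiff xscale xsym[of u2 u1])
    have wu2: "xi w u2 = 0"
      unfolding w_def \<beta>_def using n2 by (simp add: xdiff xscale)
    define S2 where "S2 = (if w = 0 then {u2} else {u2, w})"
    define S where "S = insert u1 S2"
    have u1S2: "u1 \<notin> S2"
      using u12 n1 wu1 xsym[of w u1] unfolding S2_def by auto
    have oS: "orth S"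
      unfolding orth_def S_def S2_def using a b u12 wu1 wu2 by (auto simp: xsym)
    have fS: "finite S" unfolding S_def S2_def by auto
    have cS2: "card S2 \<le> 2" unfolding S2_def by (auto simp: card_insert_if)
    have cS: "card S \<le> 3" unfolding S_def using cS2 u1S2 S2_def by (simp add: card_insert_if)
    obtain T where T: "S \<subseteq> T" "finite T" "orth T" "card T = k1 + k2"
      using orth_extend[OF nB fS oS] cS k by force
    have "card (T - S) = card T - card S" using T fS by (simp add: card_Diff_subset)
    then have "k1 - 1 \<le> card (T - S)" using T(4) cS k by linarith
    then obtain A where A: "A \<subseteq> T - S" "card A = k1 - 1" "finite A"
      by (meson obtain_subset_with_card_n)
    define T1 where "T1 = insert u1 A"
    define T2 where "T2 = T - T1"
    have u1A: "u1 \<notin> A" using A(1) S_def by auto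
    have T1T: "T1 \<subseteq> T" using A T(1) unfolding T1_def S_def by auto
    have cT1: "card T1 = k1" unfolding T1_def using u1A A k by simp
    have cT2: "card T2 = k2" unfolding T2_def using T1T T cT1 by (simp add: card_Diff_subset finite_subset)
    have S2T2: "S2 \<subseteq> T2" unfolding T2_def T1_def using T(1) A(1) u1S2 S_def by auto
    have indT: "independent T" using orth_indep[OF T(3)] .
    have dis: "T1 \<inter> T2 = {}" unfolding T2_def by auto
    have oT: "\<And>x y. x \<in> T \<Longrightarrow> y \<in> T \<Longrightarrow> x \<noteq> y \<Longrightarrow> xi x y = 0"
      using T(3) unfolding orth_def by blast
    have orth12: "xi x y = 0" if "x \<in> span T1" "y \<in> span T2" for x y
    proof (rule span_orth[OF that])
      fix x y assume "x \<in> T1" "y \<in> T2"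
      then show "xi x y = 0" using oT T1T unfolding T2_def by blast
    qed
    define X1 where "X1 = (\<lambda>x. a + x) ` span T1"
    define X2 where "X2 = (\<lambda>x. b + x) ` span T2"
    have H1: "X1 \<in> H scale k1"
      unfolding H_def lin_dim_def X1_def
      using cT1 T1T T(2) indT dependent_mono finite_subset by blast
    have H2: "X2 \<in> H scale k2"
      unfolding H_def lin_dim_def X2_def T2_def
      using cT2 T(2) indT dependent_mono unfolding T2_def by blast
    have L1X1: "L1 \<subseteq> X1" unfolding a X1_def T1_def
      using span_mono[of "{u1}" "insert u1 A"] by auto
    have L2X2: "L2 \<subseteq> X2" unfolding b X2_def
      using span_mono[of "{u2}" T2] S2T2 S2_def by (auto split: if_splits)
    have pp: "perp xi X1 X2"
      unfolding perp_def X1_def X2_def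
    proof (intro conjI ballI)
      fix p q r s assume "p \<in> (\<lambda>x. a + x) ` span T1" "q \<in> (\<lambda>x. a + x) ` span T1"
        "r \<in> (\<lambda>x. b + x) ` span T2" "s \<in> (\<lambda>x. b + x) ` span T2"
      then obtain p' q' r' s' where "p' \<in> span T1" "q' \<in> span T1" "r' \<in> span T2" "s' \<in> span T2"
        "p = a + p'" "q = a + q'" "r = b + r'" "s = b + s'" by blast
      then show "xi (q - p) (s - r) = 0" using orth12 span_diff by simp
    qed (use span_zero in auto)
    have wT2: "w \<in> span T2"
    proof (cases "w = 0")
      case True then show ?thesis using span_zero by simp
    next
      case False then show ?thesis using S2T2 span_base unfolding S2_def by auto
    qed
    have eq: "a + - (\<alpha> *s u1) = b + (\<beta> *s u2 + w)"
      unfolding w_def d'_def d_def by (simp add: algebra_simps)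
    have "a + - (\<alpha> *s u1) \<in> X1" unfolding X1_def T1_def
      by (intro imageI span_neg span_scale span_base) simp
    moreover have "b + (\<beta> *s u2 + w) \<in> X2" unfolding X2_def
    proof (intro imageI span_add wT2 span_scale span_base)
      show "u2 \<in> T2" using S2T2 S2_def by auto
    qed
    ultimately have "X1 \<inter> X2 \<noteq> {}" using eq by auto
    then show "\<exists>X1 \<in> H scale k1. \<exists>X2 \<in> H scale k2. perp_x xi X1 X2 \<and> L1 \<subseteq> X1 \<and> L2 \<subseteq> X2"
      using H1 H2 pp L1X1 L2X2 unfolding perp_x_def by blast
  qed
qed

end

theorem lemma2p3:
  fixes scale :: "'a::field \<Rightarrow> 'v::ab_group_add \<Rightarrow> 'v"
    and xi :: "'v \<Rightarrow> 'v \<Rightarrow> 'a"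
    and k1 k2 :: nat
    and L1 L2 :: "'v set"
  assumes "vector_space scale"
    and "sym_bilinear scale xi"
    and "nondegenerate xi"
    and "no_isotropic xi"
    and "\<exists>B. finite B \<and> card B = k1 + k2 \<and> \<not> module.dependent scale B"
    and "1 \<le> k1" and "1 < k2"
    and "L1 \<in> lines scale" and "L2 \<in> lines scale"
  shows "perp xi L1 L2 \<longleftrightarrow>
         (\<exists>X1 \<in> H scale k1. \<exists>X2 \<in> H scale k2. perp_x xi X1 X2 \<and> L1 \<subseteq> X1 \<and> L2 \<subseteq> X2)"
proof -
  interpret bform scale xi
    using assms(1,2,4) by (simp add: bform_def bform_axioms_def)
  show ?thesis using main assms(5-9) by blast
qed

end
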